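(* Let $\mathcal{A}\in\mathbb{R}^{l\times m\times n}$ and let $U_0\in\mathbb{R}^{l\times r_1}$, $V_0\in\mathbb{R}^{m\times r_2}$, $W_0\in\mathbb{R}^{n\times r_3}$ have orthonormal columns. Perform one block-Krylov step in each mode starting from $(U_0,V_0,W_0)$, giving $(U_1,V_1,W_1)$, and set \[ \mathcal{H}_0=\mathcal{A}\cdot(U_0,V_0,W_0),\quad \mathcal{H}^1_1=\mathcal{A}\cdot(U_1,V_0,W_0),\quad \mathcal{H}^2_1=\mathcal{A}\cdot(U_0,V_1,W_0),\quad \mathcal{H}^3_1=\mathcal{A}\cdot(U_0,V_0,W_1). \] Then the norm of the Grassmann gradient of $\Phi(U,V,W)=\|\mathcal{A}\cdot(U,V,W)\|^2$ at $(U_0,V_0,W_0)$ satisfies \[ \|\nabla(U_0,V_0,W_0)\|^2=\|\langle\mathcal{H}_0,\mathcal{H}^1_1\rangle_{-1}\|^2+\|\langle\mathcal{H}_0,\mathcal{H}^2_1\rangle_{-2}\|^2+\|\langle\mathcal{H}_0,\mathcal{H}^3_1\rangle_{-3}\|^2 . \]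
   Context: For $\mathcal{A}\in\mathbb{R}^{l\times m\times n}$ and matrices $U,V,W$ of compatible row dimensions, $\mathcal{A}\cdot(U,V,W)$ is the tensor with entries $\sum_{\alpha,\beta,\gamma}u_{\alpha i}v_{\beta j}w_{\gamma k}a_{\alpha\beta\gamma}$; $\mathcal{A}\cdot_{2,3}(V,W)$ is the analogous product in modes 2 and 3 only. Norms are Frobenius norms. Partial contractions: $\langle\mathcal{X},\mathcal{Y}\rangle_{-1}$ is the matrix with entries $\sum_{j,k}x_{ijk}y_{i'jk}$ (contraction over modes 2 and 3), and $\langle\cdot,\cdot\rangle_{-2}$, $\langle\cdot,\cdot\rangle_{-3}$ are defined analogously (contraction over all modes except mode 2, resp. mode 3). The mode-1 block-Krylov step from $(U_0,V_0,W_0)$ produces $U_1$ with orthonormal columns orthogonal to $U_0$ via a thin QR decomposition $(I-U_0U_0^T)\,\mathtt{unfold}_1(\mathcal{A}\cdot_{2,3}(V_0,W_0))=U_1H$, where $\mathtt{unfold}_1$ arranges the mode-1 fibers as columns; the mode-2 and mode-3 steps producing $V_1,W_1$ are analogous. The Grassmann gradient of $\Phi$ at $(U,V,W)$ (maximization over the product of Grassmann manifolds of the column spaces of $U,V,W$) is, in local coordinates, $(\langle\mathcal{F}^1_\perp,\mathcal{F}\rangle_{-1},\langle\mathcal{F}^2_\perp,\mathcal{F}\rangle_{-2},\langle\mathcal{F}^3_\perp,\mathcal{F}\rangle_{-3})$, where $\mathcal{F}=\mathcal{A}\cdot(U,V,W)$, $\mathcal{F}^1_\perp=\mathcal{A}\cdot(U_\perp,V,W)$,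 $\mathcal{F}^2_\perp=\mathcal{A}\cdot(U,V_\perp,W)$, $\mathcal{F}^3_\perp=\mathcal{A}\cdot(U,V,W_\perp)$, with $(U\,U_\perp)$ etc. square orthogonal matrices; its squared norm is the sum of squared Frobenius norms of the three components. *)

theory Defs
  imports Complex_Main
begin

text \<open>A matrix is a function nat => nat => real, a third-order tensor is a
function nat => nat => nat => real; all dimensions are carried explicitly and every sum
ranges over the stated index bounds, so values outside the bounds are irrelevant.\<close>

type_synonym mat = "nat \<Rightarrow> nat \<Rightarrow> real"
type_synonym tensor = "nat \<Rightarrow> nat \<Rightarrow> nat \<Rightarrow> real"

definition orthonormal_cols :: "nat \<Rightarrow> nat \<Rightarrow> mat \<Rightarrow> bool" where
  "orthonormal_cols p q U \<longleftrightarrow>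
     (\<forall>i<q. \<forall>j<q. (\<Sum>a<p. U a i * U a j) = (if i = j then 1 else 0))"

definition hcat :: "nat \<Rightarrow> mat \<Rightarrow> mat \<Rightarrow> mat" where
  "hcat r U Up = (\<lambda>i j. if j < r then U i j else Up i (j - r))"

definition orth_complement :: "nat \<Rightarrow> nat \<Rightarrow> mat \<Rightarrow> mat \<Rightarrow> bool" where
  "orth_complement p r U Up \<longleftrightarrow> r \<le> p \<and> orthonormal_cols p p (hcat r U Up)"

definition ttm :: "nat \<Rightarrow> nat \<Rightarrow> nat \<Rightarrow> tensor \<Rightarrow> mat \<Rightarrow> mat \<Rightarrow> mat \<Rightarrow> tensor" where
  "ttm l m n A U V W = (\<lambda>i j k. \<Sum>\<alpha><l. \<Sum>\<beta><m. \<Sum>\<gamma><n.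
      U \<alpha> i * V \<beta> j * W \<gamma> k * A \<alpha> \<beta> \<gamma>)"

definition ttm23 :: "nat \<Rightarrow> nat \<Rightarrow> tensor \<Rightarrow> mat \<Rightarrow> mat \<Rightarrow> tensor" where
  "ttm23 m n A V W = (\<lambda>\<alpha> j k. \<Sum>\<beta><m. \<Sum>\<gamma><n. V \<beta> j * W \<gamma> k * A \<alpha> \<beta> \<gamma>)"

definition ttm13 :: "nat \<Rightarrow> nat \<Rightarrow> tensor \<Rightarrow> mat \<Rightarrow> mat \<Rightarrow> tensor" where
  "ttm13 l n A U W = (\<lambda>i \<beta> k. \<Sum>\<alpha><l. \<Sum>\<gamma><n. U \<alpha> i * W \<gamma> k * A \<alpha> \<beta> \<gamma>)"

definition ttm12 :: "nat \<Rightarrow> nat \<Rightarrow> tensor \<Rightarrow> mat \<Rightarrow> mat \<Rightarrow> tensor" where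
  "ttm12 l m A U V = (\<lambda>i j \<gamma>. \<Sum>\<alpha><l. \<Sum>\<beta><m. U \<alpha> i * V \<beta> j * A \<alpha> \<beta> \<gamma>)"

text \<open>For X of size d1 x d2 x d3:
  unfold1 has d1 rows and d2*d3 columns, column index j + d2*k;
  unfold2 has d2 rows and d1*d3 columns, column index i + d1*k;
  unfold3 has d3 rows and d1*d2 columns, column index i + d1*j.\<close>
definition unfold1 :: "nat \<Rightarrow> tensor \<Rightarrow> mat" where
  "unfold1 d2 X = (\<lambda>i c. X i (c mod d2) (c div d2))"
definition unfold2 :: "nat \<Rightarrow> tensor \<Rightarrow> mat" where
  "unfold2 d1 X = (\<lambda>j c. X (c mod d1) j (c div d1))"
definition unfold3 :: "nat \<Rightarrow> tensor \<Rightarrow> mat" where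
  "unfold3 d1 X = (\<lambda>k c. X (c mod d1) (c div d1) k)"

definition proj_perp :: "nat \<Rightarrow> nat \<Rightarrow> mat \<Rightarrow> mat \<Rightarrow> mat" where
  "proj_perp p r U M = (\<lambda>i c. M i c - (\<Sum>a<p. (\<Sum>t<r. U i t * U a t) * M a c))"

definition thin_qr_perp :: "nat \<Rightarrow> nat \<Rightarrow> mat \<Rightarrow> nat \<Rightarrow> mat \<Rightarrow> nat \<Rightarrow> mat \<Rightarrow> mat \<Rightarrow> bool" where
  "thin_qr_perp p r U0 nc Y q Q H \<longleftrightarrow>
     orthonormal_cols p q Q \<and>
     (\<forall>s<r. \<forall>t<q. (\<Sum>a<p. U0 a s * Q a t) = 0) \<and>
     (\<forall>t<q. \<forall>c<nc. c < t \<longrightarrow> H t c = 0) \<and>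
     (\<forall>i<p. \<forall>c<nc. Y i c = (\<Sum>t<q. Q i t * H t c))"

definition krylov1 :: "nat \<Rightarrow> nat \<Rightarrow> nat \<Rightarrow> tensor \<Rightarrow> nat \<Rightarrow> nat \<Rightarrow> nat \<Rightarrow>
    mat \<Rightarrow> mat \<Rightarrow> mat \<Rightarrow> nat \<Rightarrow> mat \<Rightarrow> bool" where
  "krylov1 l m n A r1 r2 r3 U0 V0 W0 q U1 \<longleftrightarrow> (\<exists>H.
     thin_qr_perp l r1 U0 (r2 * r3) (proj_perp l r1 U0 (unfold1 r2 (ttm23 m n A V0 W0))) q U1 H)"

definition krylov2 :: "nat \<Rightarrow> nat \<Rightarrow> nat \<Rightarrow> tensor \<Rightarrow> nat \<Rightarrow> nat \<Rightarrow> nat \<Rightarrow>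
    mat \<Rightarrow> mat \<Rightarrow> mat \<Rightarrow> nat \<Rightarrow> mat \<Rightarrow> bool" where
  "krylov2 l m n A r1 r2 r3 U0 V0 W0 q V1 \<longleftrightarrow> (\<exists>H.
     thin_qr_perp m r2 V0 (r1 * r3) (proj_perp m r2 V0 (unfold2 r1 (ttm13 l n A U0 W0))) q V1 H)"

definition krylov3 :: "nat \<Rightarrow> nat \<Rightarrow> nat \<Rightarrow> tensor \<Rightarrow> nat \<Rightarrow> nat \<Rightarrow> nat \<Rightarrow>
    mat \<Rightarrow> mat \<Rightarrow> mat \<Rightarrow> nat \<Rightarrow> mat \<Rightarrow> bool" where
  "krylov3 l m n A r1 r2 r3 U0 V0 W0 q W1 \<longleftrightarrow> (\<exists>H.
     thin_qr_perp n r3 W0 (r1 * r2) (proj_perp n r3 W0 (unfold3 r1 (ttm12 l m A U0 V0))) q W1 H)"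

definition contr1 :: "nat \<Rightarrow> nat \<Rightarrow> tensor \<Rightarrow> tensor \<Rightarrow> mat" where
  "contr1 d2 d3 X Y = (\<lambda>i i'. \<Sum>j<d2. \<Sum>k<d3. X i j k * Y i' j k)"
definition contr2 :: "nat \<Rightarrow> nat \<Rightarrow> tensor \<Rightarrow> tensor \<Rightarrow> mat" where
  "contr2 d1 d3 X Y = (\<lambda>j j'. \<Sum>i<d1. \<Sum>k<d3. X i j k * Y i j' k)"
definition contr3 :: "nat \<Rightarrow> nat \<Rightarrow> tensor \<Rightarrow> tensor \<Rightarrow> mat" where
  "contr3 d1 d2 X Y = (\<lambda>k k'. \<Sum>i<d1. \<Sum>j<d2. X i j k * Y i j k')"

definition fro2 :: "nat \<Rightarrow> nat \<Rightarrow> mat \<Rightarrow> real" where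
  "fro2 p q M = (\<Sum>i<p. \<Sum>j<q. (M i j)\<^sup>2)"

text \<open>Squared norm of the Grassmann gradient of Phi at (U,V,W), in local coordinates
  given by the complements Up, Vp, Wp.\<close>
definition grass_grad_norm2 :: "nat \<Rightarrow> nat \<Rightarrow> nat \<Rightarrow> tensor \<Rightarrow> nat \<Rightarrow> nat \<Rightarrow> nat \<Rightarrow>
    mat \<Rightarrow> mat \<Rightarrow> mat \<Rightarrow> mat \<Rightarrow> mat \<Rightarrow> mat \<Rightarrow> real" where
  "grass_grad_norm2 l m n A r1 r2 r3 U V W Up Vp Wp =
     (let F = ttm l m n A U V W;
          F1 = ttm l m n A Up V W;
          F2 = ttm l m n A U Vp W;
          F3 = ttm l m n A U V Wp
      in fro2 (l - r1) r1 (contr1 r2 r3 F1 F)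
       + fro2 (m - r2) r2 (contr2 r1 r3 F2 F)
       + fro2 (n - r3) r3 (contr3 r1 r2 F3 F))"

end

theory Submission imports "Jordan_Normal_Form.Determinant" Defs begin

lemma rows_orth:
  assumes "orthonormal_cols p p Q" "a < p" "b < p"
  shows "(\<Sum>j<p. Q a j * Q b j) = (if a = b then 1 else 0)"
proof -
  define At where "At = mat p p (\<lambda>(i,j). Q j i)"
  define Bm where "Bm = mat p p (\<lambda>(i,j). Q i j)"
  have A: "At \<in> carrier_mat p p" and B: "Bm \<in> carrier_mat p p" by (auto simp: At_def Bm_def)
  have "At * Bm = 1\<^sub>m p"
  proof (rule eq_matI)
    fix i j assume "i < dim_row (1\<^sub>m p :: real Matrix.mat)" "j < dim_col (1\<^sub>m p :: real Matrix.mat)"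
    then have ij: "i < p" "j < p" by auto
    have "(At * Bm) $$ (i,j) = (\<Sum>k<p. Q k i * Q k j)"
      using ij by (simp add: At_def Bm_def scalar_prod_def row_def col_def lessThan_atLeast0)
    also have "\<dots> = (if i = j then 1 else 0)" using assms(1) ij unfolding orthonormal_cols_def by auto
    finally show "(At * Bm) $$ (i,j) = 1\<^sub>m p $$ (i,j)" using ij by simp
  qed (auto simp: At_def Bm_def)
  then have "Bm * At = 1\<^sub>m p" using mat_mult_left_right_inverse[OF A B] by blast
  then have "(Bm * At) $$ (a,b) = 1\<^sub>m p $$ (a,b)" by simp
  then show ?thesis using assms(2,3)
    by (simp add: At_def Bm_def scalar_prod_def row_def col_def lessThan_atLeast0)
qed

lemma sum_split_at:
  fixes p r :: nat
  assumes "r \<le> p"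
  shows "(\<Sum>j<p. f j) = (\<Sum>j<r. f j) + (\<Sum>i<p-r. f (r + i))"
proof -
  have "{..<p} = {..<r} \<union> {r..<p}" using assms by auto
  moreover have "sum f ({..<r} \<union> {r..<p}) = sum f {..<r} + sum f {r..<p}"
    by (rule sum.union_disjoint) auto
  ultimately have "(\<Sum>j<p. f j) = (\<Sum>j<r. f j) + (\<Sum>j\<in>{r..<p}. f j)"
    by simp
  also have "(\<Sum>j\<in>{r..<p}. f j) = (\<Sum>i<p-r. f (r + i))"
  proof -
    have "(\<Sum>j\<in>{0+r..<(p-r)+r}. f j) = (\<Sum>i\<in>{0..<p-r}. f (i + r))"
      by (rule sum.shift_bounds_nat_ivl)
    then show ?thesis using assms by (simp add: lessThan_atLeast0 add.commute)
  qed
  finally show ?thesis .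
qed

lemma parseval:
  assumes oc: "orth_complement p r U0 Up"
  shows "(\<Sum>i<p-r. (\<Sum>a<p. Up a i * x a)\<^sup>2) + (\<Sum>s<r. (\<Sum>a<p. U0 a s * x a)\<^sup>2)
         = (\<Sum>a<p. (x a)\<^sup>2)"
proof -
  define Q where "Q = hcat r U0 Up"
  have rp: "r \<le> p" and QO: "orthonormal_cols p p Q" using oc by (auto simp: orth_complement_def Q_def)
  have "(\<Sum>j<p. (\<Sum>a<p. Q a j * x a)\<^sup>2) = (\<Sum>j<p. \<Sum>a<p. \<Sum>b<p. x a * x b * (Q a j * Q b j))"
    by (intro sum.cong refl) (simp add: power2_eq_square sum_product mult_ac)
  also have "\<dots> = (\<Sum>a<p. \<Sum>j<p. \<Sum>b<p. x a * x b * (Q a j * Q b j))"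
    by (rule sum.swap)
  also have "\<dots> = (\<Sum>a<p. \<Sum>b<p. \<Sum>j<p. x a * x b * (Q a j * Q b j))"
    by (rule sum.cong[OF refl], rule sum.swap)
  also have "\<dots> = (\<Sum>a<p. \<Sum>b<p. x a * x b * (\<Sum>j<p. Q a j * Q b j))"
    by (simp add: sum_distrib_left)
  also have "\<dots> = (\<Sum>a<p. \<Sum>b<p. x a * x b * (if a = b then 1 else 0))"
    using rows_orth[OF QO] by (intro sum.cong refl) auto
  also have "\<dots> = (\<Sum>a<p. (x a)\<^sup>2)"
  proof (rule sum.cong[OF refl])
    fix a assume "a \<in> {..<p}"
    have "(\<Sum>b<p. x a * x b * (if a = b then 1 else 0)) = (\<Sum>b<p. if a = b then x a * x b else 0)"
      by (rule sum.cong) auto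
    then show "(\<Sum>b<p. x a * x b * (if a = b then 1 else 0)) = (x a)\<^sup>2"
      using \<open>a \<in> {..<p}\<close> by (simp add: power2_eq_square)
  qed
  finally have 1: "(\<Sum>j<p. (\<Sum>a<p. Q a j * x a)\<^sup>2) = (\<Sum>a<p. (x a)\<^sup>2)" .
  have "(\<Sum>j<p. (\<Sum>a<p. Q a j * x a)\<^sup>2) = (\<Sum>j<r. (\<Sum>a<p. Q a j * x a)\<^sup>2) + (\<Sum>i<p-r. (\<Sum>a<p. Q a (r+i) * x a)\<^sup>2)"
    by (rule sum_split_at[OF rp])
  also have "\<dots> = (\<Sum>s<r. (\<Sum>a<p. U0 a s * x a)\<^sup>2) + (\<Sum>i<p-r. (\<Sum>a<p. Up a i * x a)\<^sup>2)"
    by (simp add: Q_def hcat_def)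
  finally show ?thesis using 1 by simp
qed

lemma perp_Up:
  assumes oc: "orth_complement p r U0 Up" "s < r" "i < p - r"
  shows "(\<Sum>a<p. U0 a s * Up a i) = 0"
proof -
  have "orthonormal_cols p p (hcat r U0 Up)" using oc by (auto simp: orth_complement_def)
  then have "(\<Sum>a<p. hcat r U0 Up a s * hcat r U0 Up a (r+i)) = 0"
    using assms unfolding orthonormal_cols_def by auto
  then show ?thesis using assms by (simp add: hcat_def)
qed

lemma triple:
  fixes v x :: "nat \<Rightarrow> real" and U0 :: mat
  shows
  "(\<Sum>\<alpha><p. v \<alpha> * (\<Sum>a<p. (\<Sum>s<r. U0 \<alpha> s * U0 a s) * x a))
   = (\<Sum>s<r. (\<Sum>\<alpha><p. U0 \<alpha> s * v \<alpha>) * (\<Sum>a<p. U0 a s * x a))"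
proof -
  have "(\<Sum>\<alpha><p. v \<alpha> * (\<Sum>a<p. (\<Sum>s<r. U0 \<alpha> s * U0 a s) * x a))
     = (\<Sum>\<alpha><p. \<Sum>a<p. \<Sum>s<r. (U0 \<alpha> s * v \<alpha>) * (U0 a s * x a))"
    by (simp add: sum_distrib_left sum_distrib_right mult_ac)
  also have "\<dots> = (\<Sum>\<alpha><p. \<Sum>s<r. \<Sum>a<p. (U0 \<alpha> s * v \<alpha>) * (U0 a s * x a))"
    by (rule sum.cong[OF refl], rule sum.swap)
  also have "\<dots> = (\<Sum>s<r. \<Sum>\<alpha><p. \<Sum>a<p. (U0 \<alpha> s * v \<alpha>) * (U0 a s * x a))"
    by (rule sum.swap)
  also have "\<dots> = (\<Sum>s<r. (\<Sum>\<alpha><p. U0 \<alpha> s * v \<alpha>) * (\<Sum>a<p. U0 a s * x a))"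
    by (simp add: sum_product)
  finally show ?thesis .
qed

lemma proj_dot:
  fixes v x :: "nat \<Rightarrow> real" and U0 :: mat
  assumes "\<forall>s<r. (\<Sum>a<p. U0 a s * v a) = 0"
  shows "(\<Sum>\<alpha><p. v \<alpha> * (x \<alpha> - (\<Sum>a<p. (\<Sum>s<r. U0 \<alpha> s * U0 a s) * x a)))
         = (\<Sum>\<alpha><p. v \<alpha> * x \<alpha>)"
  using assms by (simp add: right_diff_distrib sum_subtractf triple)

lemma orth_expand:
  assumes U1o: "orthonormal_cols p q U1" and t: "t < q"
  shows "(\<Sum>a<p. U1 a t * (\<Sum>t'<q. U1 a t' * w t')) = w t"
proof -
  have "(\<Sum>a<p. U1 a t * (\<Sum>t'<q. U1 a t' * w t')) = (\<Sum>t'<q. (\<Sum>a<p. U1 a t * U1 a t') * w t')"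
    by (simp add: sum_distrib_left sum_distrib_right mult_ac sum.swap[of _ "{..<p}"])
  also have "\<dots> = (\<Sum>t'<q. if t = t' then w t' else 0)"
    using U1o t unfolding orthonormal_cols_def by (intro sum.cong refl) auto
  also have "\<dots> = w t" using t by simp
  finally show ?thesis .
qed

lemma vec_key:
  fixes p r q :: nat
  assumes U0o: "orthonormal_cols p r U0" and oc: "orth_complement p r U0 Up"
    and U1o: "orthonormal_cols p q U1"
    and perp: "\<forall>s<r. \<forall>t<q. (\<Sum>a<p. U0 a s * U1 a t) = 0"
    and yw: "\<forall>\<alpha><p. x \<alpha> - (\<Sum>a<p. (\<Sum>s<r. U0 \<alpha> s * U0 a s) * x a) = (\<Sum>t<q. U1 \<alpha> t * w t)"
  shows "(\<Sum>i<p-r. (\<Sum>a<p. Up a i * x a)\<^sup>2) = (\<Sum>t<q. (\<Sum>a<p. U1 a t * x a)\<^sup>2)"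
proof -
  define y where "y = (\<lambda>\<alpha>. x \<alpha> - (\<Sum>a<p. (\<Sum>s<r. U0 \<alpha> s * U0 a s) * x a))"
  have yU1: "(\<Sum>a<p. U1 a t * y a) = (\<Sum>a<p. U1 a t * x a)" if "t < q" for t
    unfolding y_def by (rule proj_dot) (use perp that in auto)
  have yUp: "(\<Sum>a<p. Up a i * y a) = (\<Sum>a<p. Up a i * x a)" if "i < p - r" for i
    unfolding y_def by (rule proj_dot) (use perp_Up[OF oc] that in auto)
  have yeq: "\<And>a. a < p \<Longrightarrow> y a = (\<Sum>t<q. U1 a t * w t)" using yw by (simp add: y_def)
  have yw1: "(\<Sum>a<p. U1 a t * y a) = w t" if "t < q" for t
  proof -
    have "(\<Sum>a<p. U1 a t * y a) = (\<Sum>a<p. U1 a t * (\<Sum>t'<q. U1 a t' * w t'))"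
      using yeq by (intro sum.cong refl) auto
    then show ?thesis using orth_expand[OF U1o that] by simp
  qed
  have yU0: "(\<Sum>a<p. U0 a s * y a) = 0" if "s < r" for s
  proof -
    have "(\<Sum>a<p. U0 a s * y a) = (\<Sum>a<p. U0 a s * x a) - (\<Sum>s'<r. (\<Sum>\<alpha><p. U0 \<alpha> s' * U0 \<alpha> s) * (\<Sum>a<p. U0 a s' * x a))"
      unfolding y_def by (simp add: right_diff_distrib sum_subtractf triple)
    also have "\<dots> = (\<Sum>a<p. U0 a s * x a) - (\<Sum>s'<r. if s' = s then (\<Sum>a<p. U0 a s' * x a) else 0)"
      using U0o that unfolding orthonormal_cols_def by (intro arg_cong2[where f="(-)"] sum.cong refl) auto
    also have "\<dots> = 0" using that by simp
    finally show ?thesis .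
  qed
  have "(\<Sum>i<p-r. (\<Sum>a<p. Up a i * x a)\<^sup>2) = (\<Sum>i<p-r. (\<Sum>a<p. Up a i * y a)\<^sup>2)"
    using yUp by simp
  also have "\<dots> = (\<Sum>a<p. (y a)\<^sup>2)"
    using parseval[OF oc, of y] yU0 by simp
  also have "\<dots> = (\<Sum>a<p. y a * (\<Sum>t<q. U1 a t * w t))"
    using yeq by (intro sum.cong refl) (auto simp: power2_eq_square)
  also have "\<dots> = (\<Sum>t<q. w t * (\<Sum>a<p. U1 a t * y a))"
    by (simp add: sum_distrib_left sum_distrib_right mult_ac sum.swap[of _ "{..<p}"])
  also have "\<dots> = (\<Sum>t<q. (\<Sum>a<p. U1 a t * y a)\<^sup>2)"
    using yw1 by (simp add: power2_eq_square)
  also have "\<dots> = (\<Sum>t<q. (\<Sum>a<p. U1 a t * x a)\<^sup>2)"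
    using yU1 by simp
  finally show ?thesis .
qed

lemma mv:
  fixes V M :: mat and z :: "nat \<Rightarrow> real"
  shows "(\<Sum>c<N. (\<Sum>\<alpha><p. V \<alpha> i * M \<alpha> c) * z c) = (\<Sum>\<alpha><p. V \<alpha> i * (\<Sum>c<N. M \<alpha> c * z c))"
  by (simp add: sum_distrib_left sum_distrib_right mult_ac sum.swap[of _ "{..<N}"])

lemma core:
  fixes p r q N :: nat and U0 Up U1 H M :: mat
  assumes U0o: "orthonormal_cols p r U0" and oc: "orth_complement p r U0 Up"
    and U1o: "orthonormal_cols p q U1"
    and perp: "\<forall>s<r. \<forall>t<q. (\<Sum>a<p. U0 a s * U1 a t) = 0"
    and qr: "\<forall>\<alpha><p. \<forall>c<N. proj_perp p r U0 M \<alpha> c = (\<Sum>t<q. U1 \<alpha> t * H t c)"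
  shows "fro2 (p-r) r (\<lambda>i i'. \<Sum>c<N. (\<Sum>\<alpha><p. Up \<alpha> i * M \<alpha> c) * (\<Sum>\<alpha><p. U0 \<alpha> i' * M \<alpha> c))
       = fro2 r q (\<lambda>i t. \<Sum>c<N. (\<Sum>\<alpha><p. U0 \<alpha> i * M \<alpha> c) * (\<Sum>\<alpha><p. U1 \<alpha> t * M \<alpha> c))"
proof -
  define z where "z = (\<lambda>i' c. \<Sum>\<beta><p. U0 \<beta> i' * M \<beta> c)"
  define x where "x = (\<lambda>i' \<alpha>. \<Sum>c<N. M \<alpha> c * z i' c)"
  define w where "w = (\<lambda>i' t. \<Sum>c<N. H t c * z i' c)"
  have key: "(\<Sum>i<p-r. (\<Sum>a<p. Up a i * x i' a)\<^sup>2) = (\<Sum>t<q. (\<Sum>a<p. U1 a t * x i' a)\<^sup>2)" for i'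
  proof (rule vec_key[OF U0o oc U1o perp, where w="w i'"], intro allI impI)
    fix \<alpha> assume a: "\<alpha> < p"
    have "x i' \<alpha> - (\<Sum>a<p. (\<Sum>s<r. U0 \<alpha> s * U0 a s) * x i' a)
        = (\<Sum>c<N. M \<alpha> c * z i' c) - (\<Sum>c<N. (\<Sum>a<p. (\<Sum>s<r. U0 \<alpha> s * U0 a s) * M a c) * z i' c)"
      unfolding x_def by (simp add: sum_distrib_left sum_distrib_right mult_ac sum.swap[of _ "{..<N}"])
    also have "\<dots> = (\<Sum>c<N. proj_perp p r U0 M \<alpha> c * z i' c)"
      by (simp add: proj_perp_def left_diff_distrib sum_subtractf)
    also have "\<dots> = (\<Sum>c<N. (\<Sum>t<q. U1 \<alpha> t * H t c) * z i' c)"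
      using qr a by (intro sum.cong refl) auto
    also have "\<dots> = (\<Sum>t<q. U1 \<alpha> t * w i' t)"
      unfolding w_def by (simp add: sum_distrib_left sum_distrib_right mult_ac sum.swap[of _ "{..<N}"])
    finally show "x i' \<alpha> - (\<Sum>a<p. (\<Sum>s<r. U0 \<alpha> s * U0 a s) * x i' a) = (\<Sum>t<q. U1 \<alpha> t * w i' t)" .
  qed
  have L: "(\<Sum>c<N. (\<Sum>\<alpha><p. Up \<alpha> i * M \<alpha> c) * (\<Sum>\<alpha><p. U0 \<alpha> i' * M \<alpha> c)) = (\<Sum>a<p. Up a i * x i' a)" for i i'
    unfolding x_def z_def by (rule mv)
  have R: "(\<Sum>c<N. (\<Sum>\<alpha><p. U0 \<alpha> i * M \<alpha> c) * (\<Sum>\<alpha><p. U1 \<alpha> t * M \<alpha> c)) = (\<Sum>a<p. U1 a t * x i a)" for i t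
    unfolding x_def z_def by (subst mult.commute) (rule mv)
  have "fro2 (p-r) r (\<lambda>i i'. \<Sum>c<N. (\<Sum>\<alpha><p. Up \<alpha> i * M \<alpha> c) * (\<Sum>\<alpha><p. U0 \<alpha> i' * M \<alpha> c))
      = (\<Sum>i<p-r. \<Sum>i'<r. (\<Sum>a<p. Up a i * x i' a)\<^sup>2)"
    unfolding fro2_def L ..
  also have "\<dots> = (\<Sum>i'<r. \<Sum>i<p-r. (\<Sum>a<p. Up a i * x i' a)\<^sup>2)" by (rule sum.swap)
  also have "\<dots> = (\<Sum>i'<r. \<Sum>t<q. (\<Sum>a<p. U1 a t * x i' a)\<^sup>2)" using key by simp
  also have "\<dots> = fro2 r q (\<lambda>i t. \<Sum>c<N. (\<Sum>\<alpha><p. U0 \<alpha> i * M \<alpha> c) * (\<Sum>\<alpha><p. U1 \<alpha> t * M \<alpha> c))"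
    unfolding fro2_def R ..
  finally show ?thesis .
qed

lemma sum_pair:
  fixes d2 d3 :: nat and f :: "nat \<Rightarrow> nat \<Rightarrow> real"
  shows "(\<Sum>j<d2. \<Sum>k<d3. f j k) = (\<Sum>c<d2*d3. f (c mod d2) (c div d2))"
proof -
  have "(\<Sum>j<d2. \<Sum>k<d3. f j k) = (\<Sum>(j,k)\<in>{..<d2}\<times>{..<d3}. f j k)"
    by (rule sum.cartesian_product)
  also have "\<dots> = (\<Sum>c<d2*d3. f (c mod d2) (c div d2))"
  proof -
    have lt: "j + d2*k < d2*d3" if "j < d2" "k < d3" for j k
    proof -
      have "j + d2*k < d2 + d2*k" using that by simp
      also have "\<dots> = d2 * (k+1)" by simp
      also have "\<dots> \<le> d2 * d3" using that by (intro mult_le_mono2) simp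
      finally show ?thesis .
    qed
    have md: "c mod d2 < d2 \<and> c div d2 < d3" if "c < d2*d3" for c
    proof -
      have d2: "d2 > 0" using that by (cases "d2 = 0") auto
      then show ?thesis using that by (auto simp: div_less_iff_less_mult mult.commute)
    qed
    show ?thesis
      by (rule sum.reindex_bij_witness[of _ "\<lambda>c. (c mod d2, c div d2)" "\<lambda>(j,k). j + d2*k"])
         (auto simp: lt md)
  qed
  finally show ?thesis .
qed

lemma gen:
  fixes p r q d2 d3 :: nat and U0 Up U1 H :: mat and B :: tensor
  assumes U0o: "orthonormal_cols p r U0" and oc: "orth_complement p r U0 Up"
    and qr: "thin_qr_perp p r U0 (d2*d3) (proj_perp p r U0 (\<lambda>\<alpha> c. B \<alpha> (c mod d2) (c div d2))) q U1 H"
  shows "fro2 (p-r) r (\<lambda>i i'. \<Sum>j<d2. \<Sum>k<d3. (\<Sum>\<alpha><p. Up \<alpha> i * B \<alpha> j k) * (\<Sum>\<alpha><p. U0 \<alpha> i' * B \<alpha> j k))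
       = fro2 r q (\<lambda>i t. \<Sum>j<d2. \<Sum>k<d3. (\<Sum>\<alpha><p. U0 \<alpha> i * B \<alpha> j k) * (\<Sum>\<alpha><p. U1 \<alpha> t * B \<alpha> j k))"
  apply (simp only: sum_pair)
  using qr unfolding thin_qr_perp_def
  apply (intro core[OF U0o oc, where H=H]) 
  apply auto
  done

lemma ttm_1: "ttm l m n A U V W = (\<lambda>i j k. \<Sum>\<alpha><l. U \<alpha> i * ttm23 m n A V W \<alpha> j k)"
  unfolding ttm_def ttm23_def by (simp add: sum_distrib_left mult_ac)

lemma ttm_2: "ttm l m n A U V W = (\<lambda>i j k. \<Sum>\<beta><m. V \<beta> j * ttm13 l n A U W i \<beta> k)"
  unfolding ttm_def ttm13_def
  by (simp add: sum_distrib_left mult_ac sum.swap[of _ "{..<m}"])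

lemma ttm_3: "ttm l m n A U V W = (\<lambda>i j k. \<Sum>\<gamma><n. W \<gamma> k * ttm12 l m A U V i j \<gamma>)"
  unfolding ttm_def ttm12_def
  by (simp add: sum_distrib_left mult_ac sum.swap[of _ "{..<n}"])

theorem proposition4p2:
  fixes l m n r1 r2 r3 q1 q2 q3 :: nat
    and A :: tensor
    and U0 V0 W0 U1 V1 W1 Up Vp Wp :: mat
  assumes "orthonormal_cols l r1 U0"
    and "orthonormal_cols m r2 V0"
    and "orthonormal_cols n r3 W0"
    and "krylov1 l m n A r1 r2 r3 U0 V0 W0 q1 U1"
    and "krylov2 l m n A r1 r2 r3 U0 V0 W0 q2 V1"
    and "krylov3 l m n A r1 r2 r3 U0 V0 W0 q3 W1"
    and "orth_complement l r1 U0 Up"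
    and "orth_complement m r2 V0 Vp"
    and "orth_complement n r3 W0 Wp"
  shows "grass_grad_norm2 l m n A r1 r2 r3 U0 V0 W0 Up Vp Wp =
           fro2 r1 q1 (contr1 r2 r3 (ttm l m n A U0 V0 W0) (ttm l m n A U1 V0 W0))
         + fro2 r2 q2 (contr2 r1 r3 (ttm l m n A U0 V0 W0) (ttm l m n A U0 V1 W0))
         + fro2 r3 q3 (contr3 r1 r2 (ttm l m n A U0 V0 W0) (ttm l m n A U0 V0 W1))"
proof -
  obtain H1 where qr1: "thin_qr_perp l r1 U0 (r2 * r3) (proj_perp l r1 U0 (unfold1 r2 (ttm23 m n A V0 W0))) q1 U1 H1"
    using assms(4) unfolding krylov1_def by blast
  obtain H2 where qr2: "thin_qr_perp m r2 V0 (r1 * r3) (proj_perp m r2 V0 (unfold2 r1 (ttm13 l n A U0 W0))) q2 V1 H2"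
    using assms(5) unfolding krylov2_def by blast
  obtain H3 where qr3: "thin_qr_perp n r3 W0 (r1 * r2) (proj_perp n r3 W0 (unfold3 r1 (ttm12 l m A U0 V0))) q3 W1 H3"
    using assms(6) unfolding krylov3_def by blast
  have e1: "fro2 (l - r1) r1 (contr1 r2 r3 (ttm l m n A Up V0 W0) (ttm l m n A U0 V0 W0))
      = fro2 r1 q1 (contr1 r2 r3 (ttm l m n A U0 V0 W0) (ttm l m n A U1 V0 W0))"
    unfolding contr1_def ttm_1
    apply (rule gen[OF assms(1) assms(7), where B="ttm23 m n A V0 W0"])
    using qr1 by (simp add: unfold1_def)
  have e2: "fro2 (m - r2) r2 (contr2 r1 r3 (ttm l m n A U0 Vp W0) (ttm l m n A U0 V0 W0))
      = fro2 r2 q2 (contr2 r1 r3 (ttm l m n A U0 V0 W0) (ttm l m n A U0 V1 W0))"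
    unfolding contr2_def ttm_2
    by (rule gen[OF assms(2) assms(8), where B="\<lambda>\<beta> i k. ttm13 l n A U0 W0 i \<beta> k"])
       (use qr2 in \<open>simp add: unfold2_def\<close>)
  have e3: "fro2 (n - r3) r3 (contr3 r1 r2 (ttm l m n A U0 V0 Wp) (ttm l m n A U0 V0 W0))
      = fro2 r3 q3 (contr3 r1 r2 (ttm l m n A U0 V0 W0) (ttm l m n A U0 V0 W1))"
    unfolding contr3_def ttm_3
    by (rule gen[OF assms(3) assms(9), where B="\<lambda>\<gamma> i j. ttm12 l m A U0 V0 i j \<gamma>"])
       (use qr3 in \<open>simp add: unfold3_def\<close>)
  show ?thesis unfolding grass_grad_norm2_def Let_def using e1 e2 e3 by simp
qed

end
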